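(* Let $n\in\mathbf{N}$ and $A\subset[n]$ have property P. For $a\in A\cap[1,\frac n2]$ let $p_a\geqslant0$ be the unique integer with $2^{p_a}a\in(\frac n4,\frac n2]$, let $B_{\frac12}=\{2^{p_a}a:a\in A\cap[1,\frac n2]\}$ and $B^{i(3)}_{\frac12}=B_{\frac12}\cap(i+3\mathbf{Z})$. Write $U=A\cap(\frac n2,n]\cap(1+3\mathbf{Z})$ and $A_{(\frac23,1]}=A\cap(\frac{2n}{3},n]$. Suppose $|U|\geqslant\frac n{12}+3$. Then $$\left|B^{2(3)}_{\frac12}\right|\leqslant\frac n{12}+2-\frac{|U|}{2},\qquad \left|B^{1(3)}_{\frac12}\right|\leqslant\frac n{10}+2-\frac{2|U|}{5}.$$ Moreover, if $\big(A_{(\frac23,1]}+A_{(\frac23,1]}\big)\cap4\mathbf{Z}$ contains an arithmetic progression of size at least $\frac{|A_{(\frac23,1]}|}{2}-1$, then either $|A_{(\frac23,1]}|\leqslant\frac n9+4$ or $$\left|B^{1(3)}_{\frac12}\right|\leqslant\frac{11n}{90}+4-\frac{2|U|}{5}-\frac{|A_{(\frac23,1]}|}{6}.$$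
   Context: A set $A\subset\mathbf{N}$ has property P if there are no $x,y,z\in A$ (not necessarily distinct $x,y$) with $z<x$, $z<y$ and $z\mid x+y$. Intervals denote sets of integers. *)

theory Defs
  imports Complex_Main
begin

definition propP :: "nat set \<Rightarrow> bool" where
  "propP A \<longleftrightarrow> \<not> (\<exists>x\<in>A. \<exists>y\<in>A. \<exists>z\<in>A. z < x \<and> z < y \<and> z dvd (x + y))"

definition Bhalf :: "nat \<Rightarrow> nat set \<Rightarrow> nat set" where
  "Bhalf n A = {2 ^ p * a | a p. a \<in> A \<and> 1 \<le> a \<and> 2 * a \<le> n
                     \<and> n < 4 * (2 ^ p * a) \<and> 2 * (2 ^ p * a) \<le> n}"

definition Uset :: "nat \<Rightarrow> nat set \<Rightarrow> nat set" where
  "Uset n A = {a \<in> A. n < 2 * a \<and> a \<le> n \<and> a mod 3 = 1}"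

definition Atop :: "nat \<Rightarrow> nat set \<Rightarrow> nat set" where
  "Atop n A = {a \<in> A. 2 * n < 3 * a \<and> a \<le> n}"

definition sumset :: "nat set \<Rightarrow> nat set \<Rightarrow> nat set" where
  "sumset X Y = {x + y | x y. x \<in> X \<and> y \<in> Y}"

definition is_AP :: "nat set \<Rightarrow> nat \<Rightarrow> bool" where
  "is_AP P m \<longleftrightarrow> (\<exists>b d. d \<ge> 1 \<and> P = {b + k * d | k. k < m})"

end

theory Submission
  imports Defs
begin

lemma sumset_card_ge:
  fixes X Y :: "nat set"
  assumes "finite X" "finite Y" "X \<noteq> {}" "Y \<noteq> {}"
  shows "card X + card Y \<le> card {x + y | x y. x \<in> X \<and> y \<in> Y} + 1"
proof -
  let ?S = "{x + y | x y. x \<in> X \<and> y \<in> Y}"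
  define a where "a = Min X"
  define b where "b = Max Y"
  have a: "a \<in> X" "\<And>x. x \<in> X \<Longrightarrow> a \<le> x" using assms a_def by auto
  have b: "b \<in> Y" "\<And>y. y \<in> Y \<Longrightarrow> y \<le> b" using assms b_def by auto
  let ?A = "(\<lambda>y. a + y) ` Y"
  let ?B = "(\<lambda>x. x + b) ` X"
  have cA: "card ?A = card Y" by (rule card_image) (auto simp: inj_on_def)
  have cB: "card ?B = card X" by (rule card_image) (auto simp: inj_on_def)
  have sub: "?A \<union> ?B \<subseteq> ?S" using a b by blast
  have fS: "finite ?S"
  proof -
    have "?S = (\<lambda>(x,y). x + y) ` (X \<times> Y)" by auto
    thus ?thesis using assms by simp
  qed
  have int: "?A \<inter> ?B \<subseteq> {a + b}"
  proof
    fix z assume "z \<in> ?A \<inter> ?B"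
    then obtain y x where y: "y \<in> Y" "z = a + y" and x: "x \<in> X" "z = x + b" by auto
    have "y \<le> b" using b y by auto
    have "a \<le> x" using a x by auto
    thus "z \<in> {a + b}" using y x \<open>y \<le> b\<close> by auto
  qed
  have "card (?A \<inter> ?B) \<le> 1" using card_mono[OF _ int] by simp
  moreover have "card (?A \<union> ?B) + card (?A \<inter> ?B) = card ?A + card ?B"
    using card_Un_Int[of ?A ?B] assms by simp
  moreover have "card (?A \<union> ?B) \<le> card ?S" using card_mono[OF fS sub] .
  ultimately show ?thesis using cA cB by linarith
qed

lemma card_class_le:
  fixes D R s0 :: nat
  assumes "D > 0"
  shows "card {w. w \<le> R \<and> w mod D = s0} \<le> R div D + 1"
proof -
  have "card {w. w \<le> R \<and> w mod D = s0} \<le> card {..R div D}"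
  proof (rule card_inj_on_le[where f = "\<lambda>w. w div D"])
    show "inj_on (\<lambda>w. w div D) {w. w \<le> R \<and> w mod D = s0}"
    proof (rule inj_onI)
      fix x y assume "x \<in> {w. w \<le> R \<and> w mod D = s0}" "y \<in> {w. w \<le> R \<and> w mod D = s0}" "x div D = y div D"
      thus "x = y" by (metis (mono_tags, lifting) mem_Collect_eq div_mod_decomp)
    qed
    show "(\<lambda>w. w div D) ` {w. w \<le> R \<and> w mod D = s0} \<subseteq> {..R div D}"
      by (auto intro: div_le_mono)
  qed auto
  thus ?thesis by simp
qed

lemma card_res_le:
  fixes D N c :: nat
  assumes "D > 0"
  shows "D * card {j. j < N \<and> j mod D = c} \<le> N + D - 1"
proof (cases "N = 0")
  case True thus ?thesis by simp
next
  case False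
  have "card {j. j < N \<and> j mod D = c} \<le> card {..(N - 1) div D}"
  proof (rule card_inj_on_le[where f = "\<lambda>w. w div D"])
    show "inj_on (\<lambda>w. w div D) {j. j < N \<and> j mod D = c}"
    proof (rule inj_onI)
      fix x y assume "x \<in> {j. j < N \<and> j mod D = c}" "y \<in> {j. j < N \<and> j mod D = c}" "x div D = y div D"
      thus "x = y" by (metis (mono_tags, lifting) mem_Collect_eq div_mod_decomp)
    qed
    show "(\<lambda>w. w div D) ` {j. j < N \<and> j mod D = c} \<subseteq> {..(N - 1) div D}"
      by (auto intro: div_le_mono)
  qed auto
  hence "card {j. j < N \<and> j mod D = c} \<le> (N - 1) div D + 1" by simp
  hence "D * card {j. j < N \<and> j mod D = c} \<le> D * ((N - 1) div D + 1)" by (rule mult_le_mono2)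
  hence "D * card {j. j < N \<and> j mod D = c} \<le> D * ((N - 1) div D) + D" by simp
  also have "D * ((N - 1) div D) \<le> N - 1" by simp
  finally show ?thesis using False by linarith
qed

lemma cfun_inj_aux:
  fixes D s0 a b :: nat
  assumes "a < D" "b < D" "a \<le> b" "(s0 + D - a) mod D = (s0 + D - b) mod D"
  shows "a = b"
proof -
  have "s0 + D - a \<ge> s0 + D - b" using assms by simp
  hence "D dvd (s0 + D - a) - (s0 + D - b)" using assms(4) mod_eq_dvd_iff_nat by metis
  moreover have "(s0 + D - a) - (s0 + D - b) = b - a" using assms by simp
  ultimately have "D dvd b - a" by simp
  moreover have "b - a < D" using assms by simp
  ultimately have "b - a = 0" using nat_dvd_not_less by (metis gr0I)
  thus "a = b" using assms by simp
qed

lemma cfun_inj: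
  fixes D s0 :: nat
  shows "inj_on (\<lambda>r. (s0 + D - r) mod D) {..<D}"
proof (rule inj_onI)
  fix r r' assume "r \<in> {..<D}" "r' \<in> {..<D}" "(s0 + D - r) mod D = (s0 + D - r') mod D"
  thus "r = r'" using cfun_inj_aux[of r D r' s0] cfun_inj_aux[of r' D r s0] by (cases "r \<le> r'") auto
qed

lemma cfun_bij:
  fixes D s0 :: nat
  assumes "D > 0"
  shows "bij_betw (\<lambda>r. (s0 + D - r) mod D) {..<D} {..<D}"
proof -
  have sub: "(\<lambda>r. (s0 + D - r) mod D) ` {..<D} \<subseteq> {..<D}" using assms by auto
  have "(\<lambda>r. (s0 + D - r) mod D) ` {..<D} = {..<D}"
    by (rule endo_inj_surj[OF _ sub cfun_inj]) simp
  thus ?thesis using cfun_inj unfolding bij_betw_def by blast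
qed

lemma MA:
  fixes D N R s0 :: nat and U Sg :: "nat set"
  assumes D: "D > 0" and s0: "s0 < D" and U: "U \<subseteq> {..<N}" and big: "N + D \<le> 2 * card U"
    and fin: "finite Sg" and Sg: "\<forall>\<sigma>\<in>Sg. \<sigma> mod D = s0 \<and> \<sigma> \<le> R" and R: "2 * N \<le> R + 2"
    and ns: "\<forall>\<sigma>\<in>Sg. \<forall>i\<in>U. \<forall>j\<in>U. i + j \<noteq> \<sigma>"
  shows "D * card Sg + 2 * card U \<le> D * (R div D + 2)"
proof -
  define X where "X r = {j \<in> U. j mod D = r}" for r
  define c where "c r = (s0 + D - r) mod D" for r
  have finU: "finite U" using U finite_subset by blast
  have finX: "finite (X r)" for r using finU X_def by simp
  have Uun: "U = (\<Union>r\<in>{..<D}. X r)" using D unfolding X_def by auto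
  have cU: "(\<Sum>r<D. card (X r)) = card U"
  proof -
    have "card (\<Union>r\<in>{..<D}. X r) = (\<Sum>r<D. card (X r))"
      by (rule card_UN_disjoint) (auto simp: finX X_def finU)
    thus ?thesis using Uun by simp
  qed
  have cU2: "(\<Sum>r<D. card (X (c r))) = card U"
  proof -
    have "(\<Sum>r<D. card (X (c r))) = (\<Sum>r<D. card (X r))"
      using sum.reindex_bij_betw[OF cfun_bij[OF D, of s0], of "\<lambda>r. card (X r)"] unfolding c_def by simp
    thus ?thesis using cU by simp
  qed
  have "\<exists>r<D. 2 * card U \<le> D * (card (X r) + card (X (c r)))"
  proof (rule ccontr)
    assume "\<not> ?thesis"
    hence lt: "\<And>r. r \<in> {..<D} \<Longrightarrow> D * (card (X r) + card (X (c r))) < 2 * card U" by auto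
    have "(\<Sum>r<D. D * (card (X r) + card (X (c r)))) < (\<Sum>r<D. 2 * card U)"
      by (rule sum_strict_mono) (use D lt in auto)
    moreover have "(\<Sum>r<D. D * (card (X r) + card (X (c r)))) = D * (card U + card U)"
      by (simp add: sum_distrib_left[symmetric] sum.distrib cU cU2)
    ultimately show False by simp
  qed
  then obtain r where r: "r < D" "2 * card U \<le> D * (card (X r) + card (X (c r)))" by blast
  have cls: "D * card (X q) \<le> N + D - 1" for q
  proof -
    have "X q \<subseteq> {j. j < N \<and> j mod D = q}" using U X_def by auto
    hence "card (X q) \<le> card {j. j < N \<and> j mod D = q}" by (rule card_mono[rotated]) simp
    hence "D * card (X q) \<le> D * card {j. j < N \<and> j mod D = q}" by simp
    thus ?thesis using card_res_le[OF D, of N q] by linarith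
  qed
  have ne1: "X r \<noteq> {}"
  proof
    assume "X r = {}"
    hence "2 * card U \<le> D * card (X (c r))" using r by simp
    thus False using cls[of "c r"] big D by linarith
  qed
  have ne2: "X (c r) \<noteq> {}"
  proof
    assume "X (c r) = {}"
    hence "2 * card U \<le> D * card (X r)" using r by simp
    thus False using cls[of r] big D by linarith
  qed
  define Z where "Z = {x + y | x y. x \<in> X r \<and> y \<in> X (c r)}"
  define W where "W = {w. w \<le> R \<and> w mod D = s0}"
  have ZW: "Z \<subseteq> W"
  proof
    fix z assume "z \<in> Z"
    then obtain x y where xy: "x \<in> X r" "y \<in> X (c r)" "z = x + y" unfolding Z_def by blast
    have "x < N" "y < N" using xy U X_def by auto
    hence "z \<le> R" using xy R by linarith
    have "z mod D = (x mod D + y mod D) mod D" using xy by (simp add: mod_add_eq)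
    also have "\<dots> = (r + (s0 + D - r) mod D) mod D" using xy X_def c_def by simp
    also have "\<dots> = (r + (s0 + D - r)) mod D" by (simp add: mod_add_right_eq)
    also have "\<dots> = (s0 + D) mod D" using r by simp
    also have "\<dots> = s0" using s0 by simp
    finally show "z \<in> W" using \<open>z \<le> R\<close> W_def by simp
  qed
  have SW: "Sg \<subseteq> W" using Sg W_def by auto
  have disj: "Sg \<inter> Z = {}"
  proof -
    have "z \<notin> Z" if "z \<in> Sg" for z
    proof
      assume "z \<in> Z"
      then obtain x y where xy: "x \<in> X r" "y \<in> X (c r)" "z = x + y" unfolding Z_def by blast
      have "x \<in> U" "y \<in> U" using xy X_def by auto
      thus False using ns that xy by blast
    qed
    thus ?thesis by blast
  qed
  have finW: "finite W" unfolding W_def by simp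
  have "card Sg + card Z = card (Sg \<union> Z)" using disj fin finW ZW finite_subset
    by (metis card_Un_disjoint)
  also have "\<dots> \<le> card W" using SW ZW finW by (intro card_mono) auto
  also have "\<dots> \<le> R div D + 1" unfolding W_def by (rule card_class_le[OF D])
  finally have A1: "card Sg + card Z \<le> R div D + 1" .
  have A2: "card (X r) + card (X (c r)) \<le> card Z + 1" unfolding Z_def
    by (rule sumset_card_ge) (use finX ne1 ne2 in auto)
  have "card Sg + card (X r) + card (X (c r)) \<le> R div D + 2" using A1 A2 by linarith
  hence "D * (card Sg + card (X r) + card (X (c r))) \<le> D * (R div D + 2)" by (rule mult_le_mono2)
  hence "D * card Sg + D * (card (X r) + card (X (c r))) \<le> D * (R div D + 2)"
    by (simp add: algebra_simps)
  thus ?thesis using r by linarith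
qed


lemma Bh:
  assumes "b \<in> Bhalf n A"
  shows "n < 4 * b \<and> 2 * b \<le> n \<and> b \<ge> 1"
  using assms unfolding Bhalf_def by auto

lemma Bh_fin: "finite (Bhalf n A)"
proof -
  have "Bhalf n A \<subseteq> {..n}" using Bh by fastforce
  thus ?thesis using finite_subset by blast
qed

lemma Kdvd:
  assumes P: "propP A" and b: "b \<in> Bhalf n A" and x: "x \<in> A" "n < 2 * x" and y: "y \<in> A" "n < 2 * y"
  shows "\<not> b dvd (x + y)"
proof
  assume bd: "b dvd (x + y)"
  from b obtain a p where ap: "b = 2 ^ p * a" "a \<in> A" "1 \<le> a" "2 * a \<le> n"
    unfolding Bhalf_def by blast
  have "a dvd b" using ap by simp
  hence "a dvd x + y" using bd dvd_trans by blast
  moreover have "a < x" "a < y" using ap x y by auto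
  ultimately show False using P ap x y unfolding propP_def by blast
qed


lemma d6: "6 * ((n::nat) div 6) \<le> n \<and> n < 6 * (n div 6) + 6" by linarith
lemma d3: "3 * ((n::nat) div 3) \<le> n \<and> n < 3 * (n div 3) + 3" by linarith

lemma a1: fixes x :: nat shows "(2 * x) mod 4 = 2 * (x mod 2)" by presburger
lemma a2: fixes b y :: nat assumes "2 * b = 3 * y + 1" shows "odd y" using assms by presburger
lemma a3: fixes q i :: nat assumes "odd (q + i)" shows "i mod 2 = (q + 1) mod 2" using assms by presburger

lemma idx_facts:
  fixes n s :: nat
  assumes "s mod 3 = 1" "n < 2 * s" "s \<le> n"
  shows "(n + 4) div 6 \<le> s div 3"
    and "s div 3 - (n + 4) div 6 < (n + 2) div 3 - (n + 4) div 6"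
    and "s = 3 * ((n + 4) div 6 + (s div 3 - (n + 4) div 6)) + 1"
proof -
  have s: "s = 3 * (s div 3) + 1" using assms(1) div_mult_mod_eq[of s 3] by linarith
  have a: "6 * ((n + 4) div 6) \<le> n + 4" "n + 4 < 6 * ((n + 4) div 6) + 6" using d6[of "n+4"] by auto
  have b: "3 * ((n + 2) div 3) \<le> n + 2" "n + 2 < 3 * ((n + 2) div 3) + 3" using d3[of "n+2"] by auto
  show 1: "(n + 4) div 6 \<le> s div 3" using s a b assms by linarith
  show "s div 3 - (n + 4) div 6 < (n + 2) div 3 - (n + 4) div 6" using s a b assms 1 by linarith
  show "s = 3 * ((n + 4) div 6 + (s div 3 - (n + 4) div 6)) + 1" using s 1 by (simp add: le_add_diff_inverse)
qed

lemma setupU: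
  fixes n :: nat and A :: "nat set"
  assumes AS: "A \<subseteq> {1..n}" and H: "n + 36 \<le> 12 * card (Uset n A)"
  defines "q0 \<equiv> (n + 4) div 6" and "N \<equiv> (n + 2) div 3 - (n + 4) div 6"
  defines "UI \<equiv> (\<lambda>s. s div 3 - q0) ` Uset n A"
  shows "UI \<subseteq> {..<N}" "card UI = card (Uset n A)"
    "\<And>i. i \<in> UI \<Longrightarrow> 3 * (q0 + i) + 1 \<in> Uset n A"
    "6 * N \<le> n + 5" "26 \<le> n" "N + 6 \<le> 2 * card UI" "3 \<le> card UI"
proof -
  let ?U = "Uset n A"
  have Uf: "u \<in> A \<and> n < 2 * u \<and> u \<le> n \<and> u mod 3 = 1" if "u \<in> ?U" for u
    using that unfolding Uset_def by auto
  have fU: "u div 3 - q0 < N \<and> u = 3 * (q0 + (u div 3 - q0)) + 1" if "u \<in> ?U" for u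
    using idx_facts[of u n] Uf[OF that] unfolding q0_def N_def by auto
  have finU: "finite ?U"
  proof -
    have "?U \<subseteq> {..n}" using Uf by auto
    thus ?thesis using finite_subset by blast
  qed
  have inj: "inj_on (\<lambda>s. s div 3 - q0) ?U"
  proof (rule inj_onI)
    fix x y assume "x \<in> ?U" "y \<in> ?U" "x div 3 - q0 = y div 3 - q0"
    thus "x = y" using fU by metis
  qed
  show sub: "UI \<subseteq> {..<N}" using fU unfolding UI_def by auto
  show cUI: "card UI = card ?U" unfolding UI_def using card_image[OF inj] .
  show "3 * (q0 + i) + 1 \<in> ?U" if "i \<in> UI" for i
    using that fU unfolding UI_def by auto
  have a: "6 * q0 \<le> n + 4" "n + 4 < 6 * q0 + 6" using d6[of "n+4"] unfolding q0_def by auto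
  have b: "3 * ((n + 2) div 3) \<le> n + 2" "n + 2 < 3 * ((n + 2) div 3) + 3" using d3[of "n+2"] by auto
  have NN: "N = (n + 2) div 3 - q0" unfolding N_def q0_def by simp
  show N6: "6 * N \<le> n + 5" using a b NN by linarith
  have "card UI \<le> N" using card_mono[OF _ sub] by simp
  hence cU: "card ?U \<le> N" using cUI by simp
  show "26 \<le> n" using H cU N6 by linarith
  show "N + 6 \<le> 2 * card UI" using H cU N6 cUI by linarith
  show "3 \<le> card UI" using H cUI by linarith
qed

lemma part1:
  fixes n :: nat and A :: "nat set"
  assumes AS: "A \<subseteq> {1..n}" and P: "propP A" and H: "n + 36 \<le> 12 * card (Uset n A)"
  shows "12 * card {b \<in> Bhalf n A. b mod 3 = 2} + 6 * card (Uset n A) \<le> n + 24"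
proof -
  define q0 where "q0 = (n + 4) div 6"
  define N where "N = (n + 2) div 3 - (n + 4) div 6"
  define UI where "UI = (\<lambda>s. s div 3 - q0) ` Uset n A"
  note S = setupU[OF AS H, folded q0_def N_def, folded UI_def]
  define B2 where "B2 = {b \<in> Bhalf n A. b mod 3 = 2}"
  define g where "g b = 2 * ((2 * b) div 3 - q0)" for b
  have Bf: "n < 4 * b \<and> 2 * b \<le> n \<and> b mod 3 = 2 \<and> b \<in> Bhalf n A" if "b \<in> B2" for b
    using that Bh unfolding B2_def by auto
  have tf: "(2 * b) div 3 - q0 < N \<and> 2 * b = 3 * (q0 + ((2 * b) div 3 - q0)) + 1" if "b \<in> B2" for b
  proof -
    have bm: "b mod 3 = 2" using Bf[OF that] by simp
    have "(2 * b) mod 3 = 1" using bm by presburger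
    thus ?thesis using idx_facts[of "2 * b" n] Bf[OF that] unfolding q0_def N_def by auto
  qed
  have finB2: "finite B2" unfolding B2_def using Bh_fin by simp
  have inj: "inj_on g B2"
  proof (rule inj_onI)
    fix x y assume xy: "x \<in> B2" "y \<in> B2" "g x = g y"
    hence "(2 * x) div 3 - q0 = (2 * y) div 3 - q0" unfolding g_def by simp
    hence "2 * x = 2 * y" using tf[OF xy(1)] tf[OF xy(2)] by metis
    thus "x = y" by simp
  qed
  define s0 where "s0 = 2 * ((q0 + 1) mod 2)"
  have gmod: "g b mod 4 = s0 \<and> g b \<le> 2 * N - 2" if "b \<in> B2" for b
  proof -
    obtain i where i: "i = (2 * b) div 3 - q0" by blast
    have e: "2 * b = 3 * (q0 + i) + 1" "i < N" using tf[OF that] i by auto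
    have "(2 * i) mod 4 = 2 * ((q0 + 1) mod 2)" using a1[of i] a3[OF a2[OF e(1)]] by simp
    moreover have "2 * i \<le> 2 * N - 2" using e(2) by linarith
    ultimately show ?thesis unfolding g_def s0_def using i by simp
  qed
  have ns: "\<forall>\<sigma>\<in>g ` B2. \<forall>i\<in>UI. \<forall>j\<in>UI. i + j \<noteq> \<sigma>"
  proof (intro ballI)
    fix \<sigma> i j assume sg: "\<sigma> \<in> g ` B2" and ij: "i \<in> UI" "j \<in> UI"
    then obtain b where b: "b \<in> B2" "\<sigma> = g b" by blast
    show "i + j \<noteq> \<sigma>"
    proof
      assume eq: "i + j = \<sigma>"
      define u where "u = 3 * (q0 + i) + 1"
      define v where "v = 3 * (q0 + j) + 1"
      have uv: "u \<in> Uset n A" "v \<in> Uset n A" using S(3) ij u_def v_def by auto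
      obtain tau where tau: "tau = 2 * b div 3 - q0" by blast
      have t1: "2 * b = 3 * (q0 + tau) + 1" using tf[OF b(1)] tau by simp
      have t2: "i + j = 2 * tau" using eq b(2) tau unfolding g_def by simp
      have "u + v = 4 * b" using t1 t2 unfolding u_def v_def by (simp add: algebra_simps)
      hence "b dvd u + v" by simp
      moreover have "u \<in> A" "n < 2 * u" "v \<in> A" "n < 2 * v" using uv unfolding Uset_def by auto
      ultimately show False using Kdvd[OF P, of b n u v] Bf[OF b(1)] by blast
    qed
  qed
  have s0lt: "s0 < 4" unfolding s0_def by simp
  have R: "2 * N \<le> (2 * N - 2) + 2" by simp
  have h1: "\<forall>\<sigma>\<in>g ` B2. \<sigma> mod 4 = s0 \<and> \<sigma> \<le> 2 * N - 2" using gmod by blast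
  have big: "N + 4 \<le> 2 * card UI" using S(6) by linarith
  have fin: "finite (g ` B2)" using finB2 by simp
  have MA4: "4 * card (g ` B2) + 2 * card UI \<le> 4 * ((2 * N - 2) div 4 + 2)"
    using MA[of 4 s0 UI N "g ` B2" "2 * N - 2", OF _ s0lt S(1) big fin h1 R ns] by simp
  have cB: "card (g ` B2) = card B2" using card_image[OF inj] .
  have "4 * ((2 * N - 2) div 4) \<le> 2 * N - 2" by simp
  moreover have "4 * ((2 * N - 2) div 4 + 2) = 4 * ((2 * N - 2) div 4) + 8" by simp
  moreover have "card UI \<le> N" using card_mono[OF _ S(1)] by simp
  ultimately have "4 * card B2 + 2 * card UI \<le> 2 * N + 6" using MA4 cB S(7) by linarith
  hence "12 * card B2 + 6 * card UI \<le> 6 * N + 18" by linarith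
  thus ?thesis using S(2) S(4) unfolding B2_def by linarith
qed


lemma m5: fixes k q :: nat assumes "2 * q \<le> 5 * k + 1" shows "(5 * k + 1 - 2 * q) mod 5 = (1 + 3 * q) mod 5"
proof -
  define x where "x = 5 * k + 1 - 2 * q"
  have e: "x + 5 * q = 5 * k + (1 + 3 * q)" using assms unfolding x_def by linarith
  have "x mod 5 = (x + 5 * q) mod 5" by simp
  also have "\<dots> = (5 * k + (1 + 3 * q)) mod 5" using e by (rule arg_cong)
  also have "\<dots> = (1 + 3 * q) mod 5" by simp
  finally show ?thesis unfolding x_def .
qed
lemma w5: fixes b :: nat assumes "b mod 3 = 1" shows "5 * b div 3 = 5 * (b div 3) + 1 \<and> b = 3 * (b div 3) + 1"
proof -
  have b: "b = 3 * (b div 3) + 1" using assms div_mult_mod_eq[of b 3] by linarith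
  obtain t where t: "t = b div 3" by blast
  have bt: "b = 3 * t + 1" using b t by simp
  have "5 * b = 3 * (5 * t + 1) + 2" using bt by simp
  hence "5 * b div 3 = (3 * (5 * t + 1) + 2) div 3" by simp
  also have "\<dots> = 5 * t + 1" by simp
  finally show ?thesis using b t by simp
qed

lemma part5:
  fixes n :: nat and A B :: "nat set" and R :: nat
  assumes AS: "A \<subseteq> {1..n}" and P: "propP A" and H: "n + 36 \<le> 12 * card (Uset n A)"
    and BB: "B \<subseteq> {b \<in> Bhalf n A. b mod 3 = 1}"
    and Rb: "\<forall>b\<in>B. 5 * b div 3 - 2 * ((n + 4) div 6) \<le> R"
    and RN: "2 * ((n + 2) div 3 - (n + 4) div 6) \<le> R + 2"
  shows "5 * card B + 2 * card (Uset n A) \<le> 5 * (R div 5 + 2)"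
proof -
  define q0 where "q0 = (n + 4) div 6"
  define N where "N = (n + 2) div 3 - (n + 4) div 6"
  define UI where "UI = (\<lambda>s. s div 3 - q0) ` Uset n A"
  note S = setupU[OF AS H, folded q0_def N_def, folded UI_def]
  define g where "g b = 5 * b div 3 - 2 * q0" for b
  have a: "6 * q0 \<le> n + 4" "n + 4 < 6 * q0 + 6" using d6[of "n+4"] unfolding q0_def by auto
  have Bf: "n < 4 * b \<and> 2 * b \<le> n \<and> b mod 3 = 1 \<and> b \<in> Bhalf n A" if "b \<in> B" for b
    using that Bh BB by blast
  have wf: "5 * b div 3 = 5 * (b div 3) + 1 \<and> b = 3 * (b div 3) + 1 \<and> 2 * q0 \<le> 5 * b div 3" if "b \<in> B" for b
  proof -
    have w: "5 * b div 3 = 5 * (b div 3) + 1 \<and> b = 3 * (b div 3) + 1" using w5 Bf[OF that] by blast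
    have "2 * q0 \<le> 5 * (b div 3) + 1" using w Bf[OF that] a S(5) by linarith
    thus ?thesis using w by simp
  qed
  have finB: "finite B" using BB Bh_fin finite_subset by (metis (no_types, lifting) mem_Collect_eq subsetI rev_finite_subset)
  have inj: "inj_on g B"
  proof (rule inj_onI)
    fix x y assume xy: "x \<in> B" "y \<in> B" "g x = g y"
    hence "5 * x div 3 = 5 * y div 3" using wf[OF xy(1)] wf[OF xy(2)] unfolding g_def by linarith
    hence "x div 3 = y div 3" using wf[OF xy(1)] wf[OF xy(2)] by linarith
    thus "x = y" using wf[OF xy(1)] wf[OF xy(2)] by linarith
  qed
  define s0 where "s0 = (1 + 3 * q0) mod 5"
  have h1: "\<forall>\<sigma>\<in>g ` B. \<sigma> mod 5 = s0 \<and> \<sigma> \<le> R"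
  proof
    fix \<sigma> assume "\<sigma> \<in> g ` B"
    then obtain b where b: "b \<in> B" "\<sigma> = g b" by blast
    have "g b = 5 * (b div 3) + 1 - 2 * q0" unfolding g_def using wf[OF b(1)] by simp
    moreover have "2 * q0 \<le> 5 * (b div 3) + 1" using wf[OF b(1)] by simp
    ultimately have "g b mod 5 = s0" using m5 unfolding s0_def by simp
    moreover have "g b \<le> R" using Rb b(1) unfolding g_def q0_def by simp
    ultimately show "\<sigma> mod 5 = s0 \<and> \<sigma> \<le> R" using b by simp
  qed
  have ns: "\<forall>\<sigma>\<in>g ` B. \<forall>i\<in>UI. \<forall>j\<in>UI. i + j \<noteq> \<sigma>"
  proof (intro ballI)
    fix \<sigma> i j assume sg: "\<sigma> \<in> g ` B" and ij: "i \<in> UI" "j \<in> UI"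
    then obtain b where b: "b \<in> B" "\<sigma> = g b" by blast
    show "i + j \<noteq> \<sigma>"
    proof
      assume eq: "i + j = \<sigma>"
      define u where "u = 3 * (q0 + i) + 1"
      define v where "v = 3 * (q0 + j) + 1"
      have uv: "u \<in> Uset n A" "v \<in> Uset n A" using S(3) ij u_def v_def by auto
      obtain k where k: "k = b div 3" by blast
      have t1: "b = 3 * k + 1" "5 * b div 3 = 5 * k + 1" "2 * q0 \<le> 5 * k + 1" using wf[OF b(1)] k by auto
      have t2: "i + j + 2 * q0 = 5 * k + 1" using eq b(2) t1 unfolding g_def by simp
      have "u + v = 5 * b" using t1 t2 unfolding u_def v_def by (simp add: algebra_simps)
      hence "b dvd u + v" by simp
      moreover have "u \<in> A" "n < 2 * u" "v \<in> A" "n < 2 * v" using uv unfolding Uset_def by auto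
      ultimately show False using Kdvd[OF P, of b n u v] Bf[OF b(1)] by blast
    qed
  qed
  have s0lt: "s0 < 5" unfolding s0_def by simp
  have big: "N + 5 \<le> 2 * card UI" using S(6) by linarith
  have fin: "finite (g ` B)" using finB by simp
  have RN': "2 * N \<le> R + 2" using RN unfolding N_def .
  have MA5: "5 * card (g ` B) + 2 * card UI \<le> 5 * (R div 5 + 2)"
    using MA[of 5 s0 UI N "g ` B" R, OF _ s0lt S(1) big fin h1 RN' ns] by simp
  have cB: "card (g ` B) = card B" using card_image[OF inj] .
  show ?thesis using MA5 cB S(2) by simp
qed


lemma r2: fixes w h n q :: nat assumes "3 * w \<le> 5 * h" "2 * h \<le> n" "n + 4 < 6 * q + 6" shows "2 * (w - 2 * q) \<le> n"
  using assms by arith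
lemma tex: fixes q e :: nat assumes "e = 1 \<or> e = 2" shows "\<exists>t<3. (q + t * e) mod 3 = 1"
proof (cases "e = 1")
  case True
  have "\<exists>t<3. (q + t) mod 3 = 1" by presburger
  thus ?thesis using True by simp
next
  case False
  hence "e = 2" using assms by simp
  have "\<exists>t<3. (q + t * 2) mod 3 = 1" by presburger
  thus ?thesis using \<open>e = 2\<close> by simp
qed

lemma part2:
  fixes n :: nat and A :: "nat set"
  assumes AS: "A \<subseteq> {1..n}" and P: "propP A" and H: "n + 36 \<le> 12 * card (Uset n A)"
  shows "10 * card {b \<in> Bhalf n A. b mod 3 = 1} + 4 * card (Uset n A) \<le> n + 20"
proof -
  define q0 where "q0 = (n + 4) div 6"
  define N where "N = (n + 2) div 3 - (n + 4) div 6"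
  define UI where "UI = (\<lambda>s. s div 3 - q0) ` Uset n A"
  note S = setupU[OF AS H, folded q0_def N_def, folded UI_def]
  define R2 where "R2 = 5 * (n div 2) div 3 - 2 * q0"
  define R where "R = max (2 * N - 2) R2"
  have Rb: "\<forall>b\<in>{b \<in> Bhalf n A. b mod 3 = 1}. 5 * b div 3 - 2 * ((n + 4) div 6) \<le> R"
  proof
    fix b assume "b \<in> {b \<in> Bhalf n A. b mod 3 = 1}"
    hence "2 * b \<le> n" using Bh by blast
    hence "b \<le> n div 2" by linarith
    hence "5 * b div 3 \<le> 5 * (n div 2) div 3" by (intro div_le_mono) simp
    hence "5 * b div 3 - 2 * q0 \<le> R2" unfolding R2_def by linarith
    thus "5 * b div 3 - 2 * ((n + 4) div 6) \<le> R" unfolding R_def q0_def by simp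
  qed
  have RN: "2 * ((n + 2) div 3 - (n + 4) div 6) \<le> R + 2" unfolding R_def N_def[symmetric] by simp
  have M: "5 * card {b \<in> Bhalf n A. b mod 3 = 1} + 2 * card (Uset n A) \<le> 5 * (R div 5 + 2)"
    by (rule part5[OF AS P H _ Rb RN]) simp
  have a: "n + 4 < 6 * q0 + 6" using d6[of "n+4"] unfolding q0_def by auto
  have h2: "2 * (n div 2) \<le> n" by simp
  have w3: "3 * (5 * (n div 2) div 3) \<le> 5 * (n div 2)" using d3[of "5 * (n div 2)"] by simp
  have "2 * R2 \<le> n" unfolding R2_def by (rule r2[OF w3 h2 a])
  moreover have "2 * (2 * N - 2) \<le> n" using S(4) S(5) by linarith
  ultimately have "2 * R \<le> n" unfolding R_def by simp
  moreover have "5 * (R div 5) \<le> R" by simp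
  moreover have "5 * (R div 5 + 2) = 5 * (R div 5) + 10" by simp
  ultimately show ?thesis using M by linarith
qed


lemma Hcard:
  fixes n :: nat
  shows "18 * card {b. n < 3 * b \<and> 2 * b \<le> n \<and> b mod 3 = 1} \<le> n + 16"
proof -
  let ?H = "{b. n < 3 * b \<and> 2 * b \<le> n \<and> b mod 3 = 1}"
  have "card ?H \<le> card {(n + 6) div 9 ..< (n + 4) div 6}"
  proof (rule card_inj_on_le[where f = "\<lambda>b. b div 3"])
    show "inj_on (\<lambda>b. b div 3) ?H"
    proof (rule inj_onI)
      fix x y assume "x \<in> ?H" "y \<in> ?H" "x div 3 = y div 3"
      thus "x = y" by (metis (mono_tags, lifting) mem_Collect_eq div_mod_decomp)
    qed
    show "(\<lambda>b. b div 3) ` ?H \<subseteq> {(n + 6) div 9 ..< (n + 4) div 6}"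
    proof
      fix z assume "z \<in> (\<lambda>b. b div 3) ` ?H"
      then obtain b where b: "b \<in> ?H" "z = b div 3" by blast
      have bb: "b = 3 * z + 1" using b div_mult_mod_eq[of b 3] by simp
      have x: "9 * ((n + 6) div 9) \<le> n + 6" using d6 by (metis div_times_less_eq_dividend mult.commute)
      have y: "n + 4 < 6 * ((n + 4) div 6) + 6" using d6[of "n+4"] by simp
      have bn: "n < 3 * b" "2 * b \<le> n" using b(1) by auto
      have "(n + 6) div 9 \<le> z" using bn bb x by linarith
      moreover have "z < (n + 4) div 6" using bn bb y by linarith
      ultimately show "z \<in> {(n + 6) div 9 ..< (n + 4) div 6}" by simp
    qed
  qed simp
  hence c: "card ?H \<le> (n + 4) div 6 - (n + 6) div 9" by simp
  have x: "n + 6 < 9 * ((n + 6) div 9) + 9"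
  proof -
    have "n + 6 = 9 * ((n + 6) div 9) + (n + 6) mod 9" by simp
    moreover have "(n + 6) mod 9 < 9" by simp
    ultimately show ?thesis by linarith
  qed
  have y: "6 * ((n + 4) div 6) \<le> n + 4" using d6[of "n+4"] by simp
  show ?thesis using c x y by linarith
qed

lemma part3:
  fixes n m :: nat and A P :: "nat set"
  assumes AS: "A \<subseteq> {1..n}" and Pr: "propP A" and H: "n + 36 \<le> 12 * card (Uset n A)"
    and AP: "is_AP P m" and mT: "card (Atop n A) \<le> 2 * m + 2"
    and PS: "P \<subseteq> {s \<in> sumset (Atop n A) (Atop n A). 4 dvd s}"
    and big: "n + 36 < 9 * card (Atop n A)"
  shows "90 * card {b \<in> Bhalf n A. b mod 3 = 1} + 36 * card (Uset n A) + 15 * card (Atop n A) \<le> 11 * n + 360"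
proof -
  define q0 where "q0 = (n + 4) div 6"
  define N where "N = (n + 2) div 3 - (n + 4) div 6"
  define UI where "UI = (\<lambda>s. s div 3 - q0) ` Uset n A"
  note S = setupU[OF AS H, folded q0_def N_def, folded UI_def]
  define B1 where "B1 = {b \<in> Bhalf n A. b mod 3 = 1}"
  define L where "L = {b \<in> B1. 3 * b \<le> n}"
  define HH where "HH = {b. n < 3 * b \<and> 2 * b \<le> n \<and> b mod 3 = 1}"
  define E where "E = {q. 4 * q \<in> P \<and> q mod 3 = 1}"
  have a: "6 * q0 \<le> n + 4" using d6[of "n+4"] unfolding q0_def by auto
  have b3: "n + 2 < 3 * ((n + 2) div 3) + 3" using d3[of "n+2"] by simp
  have RbL: "\<forall>b\<in>L. 5 * b div 3 - 2 * ((n + 4) div 6) \<le> 2 * N - 2"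
  proof
    fix b assume bL: "b \<in> L"
    hence bh: "b mod 3 = 1" "3 * b \<le> n" "n < 4 * b" using Bh unfolding L_def B1_def by auto
    have w: "5 * b div 3 = 5 * (b div 3) + 1 \<and> b = 3 * (b div 3) + 1" using w5 bh by blast
    have "5 * b div 3 + 2 \<le> 2 * ((n + 2) div 3)" using w bh b3 S(5) by linarith
    thus "5 * b div 3 - 2 * ((n + 4) div 6) \<le> 2 * N - 2" unfolding N_def by linarith
  qed
  have RN: "2 * ((n + 2) div 3 - (n + 4) div 6) \<le> (2 * N - 2) + 2" unfolding N_def by simp
  have lowB: "5 * card L + 2 * card (Uset n A) \<le> 5 * ((2 * N - 2) div 5 + 2)"
    by (rule part5[OF AS Pr H _ RbL RN]) (auto simp: L_def B1_def)
  have lowB2: "5 * card L + 2 * card (Uset n A) \<le> 2 * N + 8"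
  proof -
    have "5 * ((2 * N - 2) div 5) \<le> 2 * N - 2" by simp
    moreover have "5 * ((2 * N - 2) div 5 + 2) = 5 * ((2 * N - 2) div 5) + 10" by simp
    moreover have "card UI \<le> N" using card_mono[OF _ S(1)] by simp
    ultimately show ?thesis using lowB S(7) by linarith
  qed
  have Pf: "\<exists>x y. x \<in> A \<and> y \<in> A \<and> p = x + y \<and> 4 * n < 3 * p \<and> p \<le> 2 * n \<and> n < 2 * x \<and> n < 2 * y \<and> 4 dvd p"
    if "p \<in> P" for p
  proof -
    from that PS obtain x y where xy: "x \<in> Atop n A" "y \<in> Atop n A" "p = x + y" "4 dvd p"
      unfolding sumset_def by blast
    thus ?thesis unfolding Atop_def by auto
  qed
  from AP obtain p0 d where pd: "d \<ge> 1" "P = {p0 + k * d | k. k < m}" unfolding is_AP_def by blast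
  have inP: "p0 + k * d \<in> P" if "k < m" for k using pd that by blast
  have m18: "n + 18 < 18 * m" using mT big by linarith
  have m2: "2 \<le> m" using m18 S(5) by linarith
  have d4: "4 dvd d"
  proof -
    have "4 dvd p0" using Pf[OF inP[of 0]] m2 by auto
    moreover have "4 dvd p0 + d" using Pf[OF inP[of 1]] m2 by auto
    ultimately show ?thesis by (simp add: dvd_add_right_iff)
  qed
  have dlt: "d < 12"
  proof (rule ccontr)
    assume "\<not> d < 12"
    hence "(m - 1) * 12 \<le> (m - 1) * d" by simp
    moreover have "4 * n < 3 * p0" using Pf[OF inP[of 0]] m2 by auto
    moreover have "p0 + (m - 1) * d \<le> 2 * n" using Pf[OF inP[of "m - 1"]] m2 by auto
    ultimately show False using m18 by linarith
  qed
  obtain e where e: "d = 4 * e" using d4 by blast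
  have e12: "e = 1 \<or> e = 2"
  proof -
    have "1 \<le> e" "e \<le> 2" using e dlt pd(1) by linarith+
    thus ?thesis by arith
  qed
  have p04: "4 dvd p0" using Pf[OF inP[of 0]] m2 by auto
  obtain q1 where q1: "p0 = 4 * q1" using p04 unfolding dvd_def by blast
  obtain t where t: "t < 3" "(q1 + t * e) mod 3 = 1" using tex[OF e12] by blast
  define J where "J = (m + 2 - t) div 3"
  define phi where "phi j = q1 + (3 * j + t) * e" for j
  have phiE: "phi ` {..<J} \<subseteq> E"
  proof
    fix z assume "z \<in> phi ` {..<J}"
    then obtain j where j: "j < J" "z = phi j" by blast
    have "3 * J \<le> m + 2 - t" unfolding J_def by simp
    hence jm: "3 * j + t < m" using j t by linarith
    have "4 * z = p0 + (3 * j + t) * d" using j q1 e unfolding phi_def by (simp add: algebra_simps)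
    hence "4 * z \<in> P" using inP[OF jm] by simp
    moreover have "z mod 3 = 1"
    proof -
      have "z = (q1 + t * e) + 3 * (j * e)" using j unfolding phi_def by (simp add: algebra_simps)
      hence "z mod 3 = (q1 + t * e) mod 3" by simp
      thus ?thesis using t by simp
    qed
    ultimately show "z \<in> E" unfolding E_def by simp
  qed
  have injphi: "inj_on phi {..<J}"
  proof (rule inj_onI)
    fix x y assume "phi x = phi y"
    hence "(3 * x + t) * e = (3 * y + t) * e" unfolding phi_def by simp
    hence "3 * x + t = 3 * y + t" using e12 by auto
    thus "x = y" by simp
  qed
  have HHfin: "finite HH"
  proof -
    have "HH \<subseteq> {..n}" unfolding HH_def by auto
    thus ?thesis using finite_subset by blast
  qed
  have EH: "E \<subseteq> HH"
  proof
    fix q assume "q \<in> E"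
    hence q: "4 * q \<in> P" "q mod 3 = 1" unfolding E_def by auto
    from Pf[OF q(1)] obtain x y where "4 * n < 3 * (4 * q)" "4 * q \<le> 2 * n" by blast
    thus "q \<in> HH" using q unfolding HH_def by auto
  qed
  have Efin: "finite E" using EH HHfin finite_subset by blast
  have cE: "J \<le> card E"
  proof -
    have "card (phi ` {..<J}) = J" using card_image[OF injphi] by simp
    thus ?thesis using card_mono[OF Efin phiE] by simp
  qed
  have J3: "m \<le> 3 * J + 2"
  proof -
    have "m + 2 - t < 3 * J + 3" unfolding J_def using d3[of "m + 2 - t"] by simp
    thus ?thesis using t by linarith
  qed
  have BE: "B1 \<inter> E = {}"
  proof -
    have "q \<notin> E" if "q \<in> B1" for q
    proof
      assume "q \<in> E"
      hence "4 * q \<in> P" unfolding E_def by simp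
      from Pf[OF this] obtain x y where xy: "x \<in> A" "y \<in> A" "4 * q = x + y" "n < 2 * x" "n < 2 * y" by blast
      have "q dvd x + y" using xy(3) by (metis dvd_triv_right)
      moreover have "q \<in> Bhalf n A" using that unfolding B1_def by simp
      ultimately show False using Kdvd[OF Pr _ xy(1) xy(4) xy(2) xy(5)] by blast
    qed
    thus ?thesis by blast
  qed
  have Bsplit: "B1 \<subseteq> L \<union> (HH - E)"
  proof
    fix b assume b: "b \<in> B1"
    show "b \<in> L \<union> (HH - E)"
    proof (cases "3 * b \<le> n")
      case True thus ?thesis using b unfolding L_def by simp
    next
      case False
      hence "b \<in> HH" using b Bh unfolding B1_def HH_def by auto
      moreover have "b \<notin> E" using BE b by blast
      ultimately show ?thesis by simp
    qed
  qed
  have Lfin: "finite L" unfolding L_def B1_def using Bh_fin by simp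
  have "card B1 \<le> card (L \<union> (HH - E))" using card_mono[OF _ Bsplit] Lfin HHfin by simp
  also have "\<dots> \<le> card L + card (HH - E)" by (rule card_Un_le)
  also have "card (HH - E) = card HH - card E" using card_Diff_subset[OF Efin EH] .
  finally have cB: "card B1 + card E \<le> card L + card HH" using card_mono[OF HHfin EH] by linarith
  have cH: "18 * card HH \<le> n + 16" unfolding HH_def by (rule Hcard)
  have s1: "90 * card B1 + 90 * card E \<le> 90 * card L + 90 * card HH" using cB by linarith
  have s2: "90 * card L + 36 * card (Uset n A) \<le> 36 * N + 144" using lowB2 by linarith
  have s3: "90 * card HH \<le> 5 * n + 80" using cH by linarith
  have s4: "card (Atop n A) \<le> 6 * card E + 6" using cE J3 mT by linarith
  have s5: "15 * card (Atop n A) \<le> 90 * card E + 90" using s4 by linarith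
  have s6: "36 * N \<le> 6 * n + 30" using S(4) by linarith
  have "90 * card B1 + 36 * card (Uset n A) + 15 * card (Atop n A) \<le> 11 * n + 360"
    using s1 s2 s3 s5 s6 by linarith
  thus ?thesis unfolding B1_def .
qed


theorem mainTheorem18:
  fixes n :: nat and A :: "nat set"
  assumes "A \<subseteq> {1..n}" and "propP A"
    and "real (card (Uset n A)) \<ge> real n / 12 + 3"
  shows "real (card {b \<in> Bhalf n A. b mod 3 = 2}) \<le> real n / 12 + 2 - real (card (Uset n A)) / 2
    \<and> real (card {b \<in> Bhalf n A. b mod 3 = 1}) \<le> real n / 10 + 2 - 2 * real (card (Uset n A)) / 5
    \<and> ((\<exists>P m. is_AP P m \<and> real m \<ge> real (card (Atop n A)) / 2 - 1
               \<and> P \<subseteq> {s \<in> sumset (Atop n A) (Atop n A). 4 dvd s})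
         \<longrightarrow> real (card (Atop n A)) \<le> real n / 9 + 4
           \<or> real (card {b \<in> Bhalf n A. b mod 3 = 1})
               \<le> 11 * real n / 90 + 4 - 2 * real (card (Uset n A)) / 5 - real (card (Atop n A)) / 6)"
proof -
  have "real (n + 36) \<le> real (12 * card (Uset n A))" using assms(3) by simp
  hence H: "n + 36 \<le> 12 * card (Uset n A)" by (simp only: of_nat_le_iff)
  have p1: "12 * card {b \<in> Bhalf n A. b mod 3 = 2} + 6 * card (Uset n A) \<le> n + 24"
    by (rule part1[OF assms(1,2) H])
  have p2: "10 * card {b \<in> Bhalf n A. b mod 3 = 1} + 4 * card (Uset n A) \<le> n + 20"
    by (rule part2[OF assms(1,2) H])
  have r1: "real (12 * card {b \<in> Bhalf n A. b mod 3 = 2} + 6 * card (Uset n A)) \<le> real (n + 24)"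
    using p1 by (simp only: of_nat_le_iff)
  have r2: "real (10 * card {b \<in> Bhalf n A. b mod 3 = 1} + 4 * card (Uset n A)) \<le> real (n + 20)"
    using p2 by (simp only: of_nat_le_iff)
  have g1: "real (card {b \<in> Bhalf n A. b mod 3 = 2}) \<le> real n / 12 + 2 - real (card (Uset n A)) / 2"
    using r1 by simp
  have g2: "real (card {b \<in> Bhalf n A. b mod 3 = 1}) \<le> real n / 10 + 2 - 2 * real (card (Uset n A)) / 5"
    using r2 by simp
  have g3: "real (card (Atop n A)) \<le> real n / 9 + 4
           \<or> real (card {b \<in> Bhalf n A. b mod 3 = 1})
               \<le> 11 * real n / 90 + 4 - 2 * real (card (Uset n A)) / 5 - real (card (Atop n A)) / 6"
    if ex: "\<exists>P m. is_AP P m \<and> real m \<ge> real (card (Atop n A)) / 2 - 1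
               \<and> P \<subseteq> {s \<in> sumset (Atop n A) (Atop n A). 4 dvd s}"
  proof (cases "real (card (Atop n A)) \<le> real n / 9 + 4")
    case True thus ?thesis by simp
  next
    case False
    from ex obtain P m where Pm: "is_AP P m" "real m \<ge> real (card (Atop n A)) / 2 - 1"
      "P \<subseteq> {s \<in> sumset (Atop n A) (Atop n A). 4 dvd s}" by blast
    have "real (card (Atop n A)) \<le> real (2 * m + 2)" using Pm(2) by simp
    hence mT: "card (Atop n A) \<le> 2 * m + 2" by (simp only: of_nat_le_iff)
    have "real (n + 36) < real (9 * card (Atop n A))" using False by simp
    hence big: "n + 36 < 9 * card (Atop n A)" by (simp only: of_nat_less_iff)
    have p3: "90 * card {b \<in> Bhalf n A. b mod 3 = 1} + 36 * card (Uset n A) + 15 * card (Atop n A) \<le> 11 * n + 360"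
      by (rule part3[OF assms(1,2) H Pm(1) mT Pm(3) big])
    have "real (90 * card {b \<in> Bhalf n A. b mod 3 = 1} + 36 * card (Uset n A) + 15 * card (Atop n A)) \<le> real (11 * n + 360)"
      using p3 by (simp only: of_nat_le_iff)
    hence "real (card {b \<in> Bhalf n A. b mod 3 = 1})
               \<le> 11 * real n / 90 + 4 - 2 * real (card (Uset n A)) / 5 - real (card (Atop n A)) / 6"
      by simp
    thus ?thesis by simp
  qed
  show ?thesis using g1 g2 g3 by blast
qed

end
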